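(* Let $f(x,y;\theta)$ be a scalar function, differentiable in $\theta$ and $y$, and fix points $y^1,\ldots,y^k \in (0,1)^n$. Let $G\in\mathbb{R}^{k\times n}$ have rows $g_i^T = \nabla_y f(x,y^i;\theta)^T$ and $h\in\mathbb{R}^k$ have entries $h_i = f(x,y^i;\theta) - \nabla_y f(x,y^i;\theta)^T y^i$. Let $\hat y(x;\theta)$ be the $y$-component of the solution of $$\min_{y,t}\; t - H(y) \quad\text{s.t.}\quad Gy + h \le t\mathbf{1},$$ where $H(y) = -\sum_{j=1}^n\big(y_j\log y_j + (1-y_j)\log(1-y_j)\big)$, and let $\lambda\in\mathbb{R}^k$ be the optimal dual variable (all $k$ constraints being active at the solution). For a differentiable loss $\ell(\hat y, y^\star)$, the gradient of $\ell(\hat y(x;\theta),y^\star)$ with respect to $\theta$ is $$\nabla_\theta \ell(\hat y(x;\theta),y^\star) = \sum_{i=1}^k\Big( c^\lambda_i \nabla_\theta f(x,y^i;\theta) + \nabla_\theta\Big(\nabla_y f(x,y^i;\theta)^T\big(\lambda_i c^y + c^\lambda_i(\hat y(x;\theta) - y^i)\big)\Big)\Big),$$ where $(c^y, c^\lambda, c^t)\in\mathbb{R}^n\times\mathbb{R}^k\times\mathbb{R}$ solve the linear system $$\begin{bmatrix} D & G^T & 0\\ G & 0 & -\mathbf{1}\\ 0 & -\mathbf{1}^T & 0\end{bmatrix}\begin{bmatrix} c^y\\ c^\lambda\\ c^t\end{bmatrix} = \begin{bmatrix} -\nabla_{\hat y}\ell(\hat y,y^\star)\\ 0\\ 0\end{bmatrix},\qquad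 D = \operatorname{diag}\!\left(\frac{1}{\hat y}+\frac{1}{1-\hat y}\right).$$
   Context: This is the setting of the "bundle entropy method" for approximately minimizing $f(x,y;\theta) - H(y)$ over $y\in[0,1]^n$: $y^i$ is the iterate produced at the $i$-th iteration, and the cutting planes $g_i^T y + h_i$ are first-order approximations of $f(x,\cdot;\theta)$ at $y^i$; $\hat y(x;\theta)$ is the approximate minimizer returned at the last iteration, and $k$ is the number of active cutting planes kept. In the gradient, $\hat y$ depends on $\theta$ through $G$ and $h$ (the points $y^i$ are held fixed), and the term $\nabla_\theta(\nabla_y f(x,y^i;\theta)^T v)$ denotes the gradient in $\theta$ of the scalar $\nabla_y f(x,y^i;\theta)^T v$ with the vector $v$ held fixed. The fraction in $D$ is taken elementwise; $\mathbf{1}$ denotes the all-ones vector; the linear system is assumed nonsingular. *)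

theory Defs
  imports "HOL-Analysis.Analysis"
begin

definition grad :: "('a::real_inner \<Rightarrow> real) \<Rightarrow> 'a \<Rightarrow> 'a" where
  "grad f a = (THE D. GDERIV f a :> D)"

text \<open>Binary entropy H(y) = - sum_j (y_j log y_j + (1 - y_j) log (1 - y_j)), with 0 log 0 = 0
  (which is Isabelle's convention since ln 0 = 0).\<close>
definition entropy :: "real^'n \<Rightarrow> real" where
  "entropy y = - (\<Sum>j\<in>UNIV. y$j * ln (y$j) + (1 - y$j) * ln (1 - y$j))"

definition unit_box :: "(real^'n) set" where
  "unit_box = {y. \<forall>j. 0 \<le> y$j \<and> y$j \<le> 1}"

definition Gmat :: "('x \<Rightarrow> real^'n \<Rightarrow> 'p \<Rightarrow> real) \<Rightarrow> 'x \<Rightarrow> ('k \<Rightarrow> real^'n) \<Rightarrow> 'p \<Rightarrow> real^'n^'k" where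
  "Gmat f x ys \<theta> = (\<chi> i. grad (\<lambda>y. f x y \<theta>) (ys i))"

definition hvec :: "('x \<Rightarrow> real^'n \<Rightarrow> 'p \<Rightarrow> real) \<Rightarrow> 'x \<Rightarrow> ('k \<Rightarrow> real^'n) \<Rightarrow> 'p \<Rightarrow> real^'k" where
  "hvec f x ys \<theta> = (\<chi> i. f x (ys i) \<theta> - (Gmat f x ys \<theta> $ i) \<bullet> ys i)"

definition bundle_feasible :: "real^'n^'k \<Rightarrow> real^'k \<Rightarrow> real^'n \<Rightarrow> real \<Rightarrow> bool" where
  "bundle_feasible G h y t \<longleftrightarrow> y \<in> unit_box \<and> (\<forall>i. (G *v y + h) $ i \<le> t)"

definition bundle_solution :: "real^'n^'k \<Rightarrow> real^'k \<Rightarrow> real^'n \<Rightarrow> real \<Rightarrow> bool" where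
  "bundle_solution G h y t \<longleftrightarrow> bundle_feasible G h y t \<and>
     (\<forall>y' t'. bundle_feasible G h y' t' \<longrightarrow> t - entropy y \<le> t' - entropy y')"

definition bundle_lagrangian :: "real^'n^'k \<Rightarrow> real^'k \<Rightarrow> real^'k \<Rightarrow> real^'n \<Rightarrow> real \<Rightarrow> real" where
  "bundle_lagrangian G h lam y t = t - entropy y + lam \<bullet> (G *v y + h - (\<chi> i. t))"

definition bundle_opt_dual :: "real^'n^'k \<Rightarrow> real^'k \<Rightarrow> real^'n \<Rightarrow> real \<Rightarrow> real^'k \<Rightarrow> bool" where
  "bundle_opt_dual G h y t lam \<longleftrightarrow> (\<forall>i. 0 \<le> lam $ i) \<and>
     (\<forall>y'\<in>unit_box. \<forall>t'. bundle_lagrangian G h lam y t \<le> bundle_lagrangian G h lam y' t') \<and>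
     (\<forall>i. lam $ i * ((G *v y + h) $ i - t) = 0)"

text \<open>The block matrix [[D, G^T, 0], [G, 0, -1], [0, -1^T, 0]], D = diag(1/y + 1/(1-y)),
  indexed by 'n + ('k + unit).\<close>
definition kkt_matrix :: "real^'n^'k \<Rightarrow> real^'n \<Rightarrow> real^('n + ('k + unit))^('n + ('k + unit))" where
  "kkt_matrix G y = (\<chi> r c. case (r, c) of
      (Inl a, Inl b) \<Rightarrow> (if a = b then 1 / y$a + 1 / (1 - y$a) else 0)
    | (Inl a, Inr (Inl i)) \<Rightarrow> G $ i $ a
    | (Inl a, Inr (Inr _)) \<Rightarrow> 0
    | (Inr (Inl i), Inl b) \<Rightarrow> G $ i $ b
    | (Inr (Inl i), Inr (Inl j)) \<Rightarrow> 0
    | (Inr (Inl i), Inr (Inr _)) \<Rightarrow> -1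
    | (Inr (Inr _), Inl b) \<Rightarrow> 0
    | (Inr (Inr _), Inr (Inl j)) \<Rightarrow> -1
    | (Inr (Inr _), Inr (Inr _)) \<Rightarrow> 0)"

definition stack3 :: "real^'n \<Rightarrow> real^'k \<Rightarrow> real \<Rightarrow> real^('n + ('k + unit))" where
  "stack3 u v s = (\<chi> r. case r of Inl a \<Rightarrow> u$a | Inr (Inl i) \<Rightarrow> v$i | Inr (Inr _) \<Rightarrow> s)"

end

theory Submission
  imports Defs
begin





lemma gderiv_grad:
  fixes \<phi> :: "'a::euclidean_space \<Rightarrow> real"
  assumes "\<phi> differentiable (at a)"
  shows "GDERIV \<phi> a :> grad \<phi> a"
proof -
  obtain D where D: "(\<phi> has_derivative D) (at a)" using assms differentiable_def by blast
  define d where "d = (\<Sum>b\<in>Basis. D b *\<^sub>R b)"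
  have lin: "linear D" using D has_derivative_linear by blast
  have eq: "D = (\<lambda>h. h \<bullet> d)"
  proof
    fix h
    have "D h = D (\<Sum>b\<in>Basis. (h \<bullet> b) *\<^sub>R b)" by (simp add: euclidean_representation)
    also have "\<dots> = (\<Sum>b\<in>Basis. (h \<bullet> b) * D b)"
      using lin by (simp add: linear_sum linear_scale)
    also have "\<dots> = h \<bullet> d" unfolding d_def by (simp add: inner_sum_right mult.commute)
    finally show "D h = h \<bullet> d" .
  qed
  have G: "GDERIV \<phi> a :> d" unfolding gderiv_def using D eq by simp
  have "grad \<phi> a = d"
    unfolding grad_def
  proof (rule the_equality[where P="\<lambda>D. GDERIV \<phi> a :> D", OF G])
    fix d' assume "GDERIV \<phi> a :> d'"
    then have "(\<lambda>h. h \<bullet> d') = (\<lambda>h. h \<bullet> d)" using G unfolding gderiv_def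
      by (rule has_derivative_unique)
    then have "(d' - d) \<bullet> d' = (d' - d) \<bullet> d" by metis
    then have "(d' - d) \<bullet> (d' - d) = 0" by (simp add: inner_diff_right)
    then show "d' = d" by simp
  qed
  then show ?thesis using G by simp
qed

lemma delta_aux: fixes c :: "'a::finite \<Rightarrow> real" shows "(\<Sum>x\<in>UNIV. c x * (if i = x then 1 else 0)) = (c i :: real)"
proof -
  have "(\<Sum>x\<in>UNIV. c x * (if i = x then 1 else 0)) = (\<Sum>x\<in>UNIV. if i = x then c x else 0)"
    by (rule sum.cong) auto
  then show ?thesis by (simp add: sum.delta')
qed

lemma has_derivative_vec:
  fixes f :: "'a::real_normed_vector \<Rightarrow> real^'m"
  assumes "\<And>i. ((\<lambda>x. f x $ i) has_derivative f' i) (at a)"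
  shows "(f has_derivative (\<lambda>h. \<chi> i. f' i h)) (at a)"
proof -
  have eqf: "f = (\<lambda>x. \<Sum>i\<in>UNIV. f x $ i *\<^sub>R axis i 1)"
    by (rule ext) (simp add: vec_eq_iff sum_component axis_def if_distrib cong: if_cong)
  have eqf': "(\<lambda>h. \<chi> i. f' i h) = (\<lambda>h. \<Sum>i\<in>UNIV. f' i h *\<^sub>R axis i 1)"
  proof (rule ext)
    fix h
    show "(\<chi> i. f' i h) = (\<Sum>i\<in>UNIV. f' i h *\<^sub>R axis i 1)"
      unfolding vec_eq_iff
    proof
      fix i
      have "(\<Sum>x\<in>UNIV. f' x h *\<^sub>R axis x (1::real)) $ i = (\<Sum>x\<in>UNIV. f' x h * (if i = x then 1 else 0))"
        by (simp add: sum_component axis_def)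
      also have "\<dots> = f' i h" by (rule delta_aux)
      finally show "(\<chi> i. f' i h) $ i = (\<Sum>x\<in>UNIV. f' x h *\<^sub>R axis x 1) $ i" by simp
    qed
  qed
  have HD: "((\<lambda>x. \<Sum>i\<in>UNIV. f x $ i *\<^sub>R axis i 1) has_derivative (\<lambda>h. \<Sum>i\<in>UNIV. f' i h *\<^sub>R axis i 1)) (at a)"
    by (intro has_derivative_sum has_derivative_scaleR_left assms)
  show ?thesis unfolding eqf' by (subst eqf) (rule HD)
qed



definition ent1 :: "real \<Rightarrow> real" where "ent1 s = s * ln s + (1 - s) * ln (1 - s)"
definition sig :: "real \<Rightarrow> real" where "sig c = 1 / (1 + exp c)"

lemma sig_bounds: "0 < sig c" "sig c < 1"
  unfolding sig_def by (auto simp: field_simps add_pos_pos)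

lemma sig_ln: "ln (sig c) - ln (1 - sig c) = - c"
proof -
  have e: "0 < exp c" by simp
  have d: "1 + exp c \<noteq> 0" using e by linarith
  have "1 - sig c = exp c / (1 + exp c)" unfolding sig_def using d by (simp add: field_simps)
  moreover have pos: "0 < 1 + exp c" using e by linarith
  ultimately have "ln (1 - sig c) = c - ln (1 + exp c)" using e pos by (simp add: ln_div)
  moreover have "ln (sig c) = - ln (1 + exp c)" unfolding sig_def using pos by (simp add: ln_div)
  ultimately show ?thesis by simp
qed

lemma kl_term:
  fixes p q :: real
  assumes "0 < q" "0 \<le> p"
  shows "0 \<le> p * ln p - p * ln q - (p - q)"
    and "p * ln p - p * ln q - (p - q) = 0 \<Longrightarrow> p = q"
proof -
  have A: "0 \<le> p * ln p - p * ln q - (p - q) \<and> (p * ln p - p * ln q - (p - q) = 0 \<longrightarrow> p = q)"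
  proof (cases "p = 0")
    case True then show ?thesis using assms by simp
  next
    case False
    then have p: "0 < p" using assms by simp
    have l: "ln (q / p) = ln q - ln p" using p assms by (simp add: ln_div)
    have le: "ln (q/p) \<le> q/p - 1" using ln_le_minus_one p assms by simp
    have "p * (ln q - ln p) \<le> p * (q/p - 1)" using le l p by (simp add: mult_left_mono)
    have pq: "p * (q/p - 1) = q - p" using p by (simp add: field_simps)
    then have 1: "p * (ln q - ln p) \<le> q - p" using le l p \<open>p * (ln q - ln p) \<le> p * (q/p - 1)\<close> by linarith
    show ?thesis
    proof
      show "0 \<le> p * ln p - p * ln q - (p - q)" using 1 by (simp add: algebra_simps)
      show "p * ln p - p * ln q - (p - q) = 0 \<longrightarrow> p = q"
      proof
        assume "p * ln p - p * ln q - (p - q) = 0"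
        then have "p * (ln q - ln p) = q - p" by (simp add: algebra_simps)
        then have "p * (ln q - ln p) = p * (q/p - 1)" using pq by simp
        then have "ln (q/p) = q/p - 1" using p l by simp
        then have "q/p = 1" using ln_eq_minus_one[of "q/p"] p assms by simp
        then show "p = q" using p by simp
      qed
    qed
  qed
  then show "0 \<le> p * ln p - p * ln q - (p - q)" by blast
  show "p * ln p - p * ln q - (p - q) = 0 \<Longrightarrow> p = q" using A by blast
qed

lemma phi_min:
  fixes s c :: real
  assumes "0 \<le> s" "s \<le> 1"
  shows "ent1 (sig c) + c * sig c \<le> ent1 s + c * s"
    and "ent1 s + c * s \<le> ent1 (sig c) + c * sig c \<Longrightarrow> s = sig c"
proof -
  let ?q = "sig c"
  have q: "0 < ?q" "0 < 1 - ?q" using sig_bounds[of c] by auto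
  have cq: "c = ln (1 - ?q) - ln ?q" using sig_ln[of c] by simp
  have "ent1 ?q + c * ?q = ?q * ln ?q + (1 - ?q) * ln (1 - ?q) + (ln (1 - ?q) - ln ?q) * ?q"
    unfolding ent1_def by (subst cq) simp
  also have "\<dots> = ln (1 - ?q)" by (simp add: algebra_simps)
  finally have e1: "ent1 ?q + c * ?q = ln (1 - ?q)" .
  have e2: "ent1 s + c * s - ln (1 - ?q) =
     (s * ln s - s * ln ?q - (s - ?q)) + ((1-s) * ln (1-s) - (1-s) * ln (1 - ?q) - ((1-s) - (1-?q)))"
  proof -
    show ?thesis unfolding ent1_def by (subst cq) (simp add: algebra_simps)
  qed
  have a: "0 \<le> s * ln s - s * ln ?q - (s - ?q)" using kl_term(1)[of ?q s] q assms by simp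
  have b: "0 \<le> (1-s) * ln (1-s) - (1-s) * ln (1 - ?q) - ((1-s) - (1-?q))"
    using kl_term(1)[of "1-?q" "1-s"] q assms by simp
  show "ent1 (sig c) + c * sig c \<le> ent1 s + c * s" using e1 e2 a b by linarith
  assume "ent1 s + c * s \<le> ent1 (sig c) + c * sig c"
  then have "s * ln s - s * ln ?q - (s - ?q) = 0" using e1 e2 a b by linarith
  then show "s = sig c" using kl_term(2)[of ?q s] q assms by simp
qed




lemma lagr_sep:
  fixes G :: "real^'n^'k"
  shows "bundle_lagrangian G h lam y t = t * (1 - (\<Sum>i\<in>UNIV. lam$i)) + lam \<bullet> h
     + (\<Sum>j\<in>UNIV. ent1 (y$j) + (\<Sum>i\<in>UNIV. lam$i * G$i$j) * y$j)"
proof -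
  have 1: "lam \<bullet> (G *v y) = (\<Sum>j\<in>UNIV. (\<Sum>i\<in>UNIV. lam$i * G$i$j) * y$j)"
  proof -
    have "lam \<bullet> (G *v y) = (\<Sum>i\<in>UNIV. \<Sum>j\<in>UNIV. lam$i * G$i$j * y$j)"
      unfolding inner_vec_def matrix_vector_mult_def by (simp add: sum_distrib_left mult.assoc)
    also have "\<dots> = (\<Sum>j\<in>UNIV. \<Sum>i\<in>UNIV. lam$i * G$i$j * y$j)" by (rule sum.swap)
    also have "\<dots> = (\<Sum>j\<in>UNIV. (\<Sum>i\<in>UNIV. lam$i * G$i$j) * y$j)" by (simp add: sum_distrib_right)
    finally show ?thesis .
  qed
  have 2: "lam \<bullet> (\<chi> i. t) = t * (\<Sum>i\<in>UNIV. lam$i)"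
    unfolding inner_vec_def by (simp add: sum_distrib_left mult.commute)
  have 3: "entropy y = - (\<Sum>j\<in>UNIV. ent1 (y$j))" unfolding entropy_def ent1_def by simp
  show ?thesis unfolding bundle_lagrangian_def inner_add_right inner_diff_right 1 2 3
    by (simp add: sum.distrib algebra_simps)
qed

lemma sum_update:
  fixes \<psi> :: "'n::finite \<Rightarrow> real \<Rightarrow> real"
  shows "(\<Sum>i\<in>UNIV. \<psi> i ((\<chi> i. if i = j then s else y$i) $ i))
     = (\<Sum>i\<in>UNIV. \<psi> i (y$i)) + (\<psi> j s - \<psi> j (y$j))"
proof -
  have "(\<Sum>i\<in>UNIV. \<psi> i ((\<chi> i. if i = j then s else y$i) $ i)) - (\<Sum>i\<in>UNIV. \<psi> i (y$i))
     = (\<Sum>i\<in>UNIV. if i = j then \<psi> j s - \<psi> j (y$j) else 0)"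
    unfolding sum_subtractf[symmetric] by (rule sum.cong) auto
  also have "\<dots> = \<psi> j s - \<psi> j (y$j)" by simp
  finally show ?thesis by simp
qed

lemma update_box:
  assumes "y \<in> unit_box" "0 \<le> s" "s \<le> 1"
  shows "(\<chi> i. if i = j then s else y$i) \<in> unit_box"
  using assms unfolding unit_box_def by auto

lemma dual_stationary:
  fixes G :: "real^'n^'k"
  assumes d: "bundle_opt_dual G h y t lam" and yb: "y \<in> unit_box"
  shows "(\<Sum>i\<in>UNIV. lam$i) = 1" and "\<And>j. y$j = sig (\<Sum>i\<in>UNIV. lam$i * G$i$j)"
proof -
  have min: "\<And>y' t'. y' \<in> unit_box \<Longrightarrow> bundle_lagrangian G h lam y t \<le> bundle_lagrangian G h lam y' t'"
    using d unfolding bundle_opt_dual_def by blast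
  let ?S = "\<Sum>i\<in>UNIV. lam$i"
  have "bundle_lagrangian G h lam y t \<le> bundle_lagrangian G h lam y (t+1)"
       "bundle_lagrangian G h lam y t \<le> bundle_lagrangian G h lam y (t-1)"
    using min yb by auto
  then have a: "0 \<le> 1 - ?S" "0 \<le> -(1 - ?S)" unfolding lagr_sep by (simp_all add: algebra_simps)
  then show S: "?S = 1" by simp
  fix j
  let ?c = "\<Sum>i\<in>UNIV. lam$i * G$i$j"
  let ?\<psi> = "\<lambda>j s. ent1 s + (\<Sum>i\<in>UNIV. lam$i * G$i$j) * s"
  let ?y' = "\<chi> i. if i = j then sig ?c else y$i"
  have "?y' \<in> unit_box" using update_box[OF yb, of "sig ?c" j] sig_bounds[of ?c] by simp
  then have "bundle_lagrangian G h lam y t \<le> bundle_lagrangian G h lam ?y' t" using min by blast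
  then have "(\<Sum>i\<in>UNIV. ?\<psi> i (y$i)) \<le> (\<Sum>i\<in>UNIV. ?\<psi> i (?y'$i))"
    unfolding lagr_sep by simp
  also have "\<dots> = (\<Sum>i\<in>UNIV. ?\<psi> i (y$i)) + (?\<psi> j (sig ?c) - ?\<psi> j (y$j))"
    by (rule sum_update)
  finally have "?\<psi> j (y$j) \<le> ?\<psi> j (sig ?c)" by simp
  moreover have "0 \<le> y$j" "y$j \<le> 1" using yb unfolding unit_box_def by auto
  ultimately show "y$j = sig ?c" using phi_min(2)[of "y$j" ?c] by simp
qed




lemma sig_inj: "sig a = sig b \<Longrightarrow> a = b"
proof -
  assume "sig a = sig b"
  then have "1 + exp a = 1 + exp b" unfolding sig_def by simp
  then show "a = b" by simp
qed

lemma lagr_active: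
  assumes "\<And>i. (G *v y + h) $ i = t"
  shows "bundle_lagrangian G h lam y t = t - entropy y"
proof -
  have "G *v y + h - (\<chi> i. t) = 0" using assms by (simp add: vec_eq_iff)
  then show ?thesis unfolding bundle_lagrangian_def by simp
qed

lemma sig_box: "(\<chi> j. sig (c j)) \<in> unit_box"
  unfolding unit_box_def using sig_bounds by (auto intro: less_imp_le)

lemma uniq_dual:
  fixes G :: "real^'n^'k"
  assumes d: "bundle_opt_dual G h y0 t0 l0" and yb: "y0 \<in> unit_box"
    and act: "\<And>i. (G *v y0 + h) $ i = t0"
    and inj: "\<And>\<mu>::real^'k. (\<And>j. (\<Sum>i\<in>UNIV. \<mu> $ i * G $ i $ j) = 0) \<Longrightarrow> (\<Sum>i\<in>UNIV. \<mu> $ i) = 0 \<Longrightarrow> \<mu> = 0"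
    and lpos: "\<forall>i. 0 \<le> l $ i" and ls: "(\<Sum>i\<in>UNIV. l $ i) = 1"
    and eqW: "\<forall>i i'. (\<Sum>j\<in>UNIV. G $ i $ j * sig (\<Sum>i''\<in>UNIV. l $ i'' * G $ i'' $ j)) + h $ i
             = (\<Sum>j\<in>UNIV. G $ i' $ j * sig (\<Sum>i''\<in>UNIV. l $ i'' * G $ i'' $ j)) + h $ i'"
  shows "l = l0"
proof -
  have s0: "(\<Sum>i\<in>UNIV. l0 $ i) = 1" and y0s: "\<And>j. y0 $ j = sig (\<Sum>i\<in>UNIV. l0 $ i * G $ i $ j)"
    using dual_stationary[OF d yb] by auto
  define c' where "c' j = (\<Sum>i\<in>UNIV. l $ i * G $ i $ j)" for j
  define c0 where "c0 j = (\<Sum>i\<in>UNIV. l0 $ i * G $ i $ j)" for j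
  define y' where "y' = (\<chi> j. sig (c' j))"
  obtain i0 :: 'k where True by blast
  define t' where "t' = (G *v y' + h) $ i0"
  have act': "\<And>i. (G *v y' + h) $ i = t'"
    using eqW unfolding t'_def y'_def c'_def by (simp add: matrix_vector_mult_def)
  have y'b: "y' \<in> unit_box" unfolding y'_def by (rule sig_box)
  have y'c: "0 \<le> y' $ j" "y' $ j \<le> 1" for j using y'b unfolding unit_box_def by auto
  have y0c: "0 \<le> y0 $ j" "y0 $ j \<le> 1" for j using yb unfolding unit_box_def by auto
  have "bundle_lagrangian G h l y' t' \<le> bundle_lagrangian G h l y0 t0"
    unfolding lagr_sep ls
  proof -
    have "(\<Sum>j\<in>UNIV. ent1 (y' $ j) + c' j * y' $ j) \<le> (\<Sum>j\<in>UNIV. ent1 (y0 $ j) + c' j * y0 $ j)"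
      by (intro sum_mono) (simp add: y'_def phi_min(1) y0c)
    then show "t' * (1 - 1) + l \<bullet> h + (\<Sum>j\<in>UNIV. ent1 (y' $ j) + (\<Sum>i\<in>UNIV. l $ i * G $ i $ j) * y' $ j)
      \<le> t0 * (1 - 1) + l \<bullet> h + (\<Sum>j\<in>UNIV. ent1 (y0 $ j) + (\<Sum>i\<in>UNIV. l $ i * G $ i $ j) * y0 $ j)"
      unfolding c'_def by simp
  qed
  then have v1: "t' - entropy y' \<le> t0 - entropy y0"
    using lagr_active[OF act'] lagr_active[OF act] by simp
  have "bundle_lagrangian G h l0 y0 t0 \<le> bundle_lagrangian G h l0 y' t'"
    using d y'b unfolding bundle_opt_dual_def by blast
  then have v2: "t0 - entropy y0 \<le> t' - entropy y'"
    using lagr_active[OF act'] lagr_active[OF act] by simp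
  have "bundle_lagrangian G h l0 y' t' = bundle_lagrangian G h l0 y0 t0"
    using v1 v2 lagr_active[OF act'] lagr_active[OF act] by simp
  then have seq: "(\<Sum>j\<in>UNIV. ent1 (y' $ j) + c0 j * y' $ j) = (\<Sum>j\<in>UNIV. ent1 (y0 $ j) + c0 j * y0 $ j)"
    unfolding lagr_sep s0 c0_def by simp
  have yy: "y' $ j = y0 $ j" for j
  proof -
    define D where "D j = (ent1 (y' $ j) + c0 j * y' $ j) - (ent1 (y0 $ j) + c0 j * y0 $ j)" for j
    have ge: "0 \<le> D j" for j
    proof -
      have "ent1 (sig (c0 j)) + c0 j * sig (c0 j) \<le> ent1 (y' $ j) + c0 j * y' $ j"
        by (rule phi_min(1)[OF y'c])
      moreover have "y0 $ j = sig (c0 j)" using y0s[of j] unfolding c0_def .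
      ultimately show ?thesis unfolding D_def by simp
    qed
    have "sum D UNIV = 0"
      using seq unfolding D_def by (simp add: sum_subtractf)
    then have "\<forall>j\<in>UNIV. D j = 0"
      using sum_nonneg_eq_0_iff[of UNIV D] ge by simp
    then have "D j = 0" by simp
    then have "(ent1 (y' $ j) + c0 j * y' $ j) - (ent1 (y0 $ j) + c0 j * y0 $ j) = 0"
      unfolding D_def .
    then have "ent1 (y' $ j) + c0 j * y' $ j \<le> ent1 (sig (c0 j)) + c0 j * sig (c0 j)"
      using y0s unfolding c0_def by simp
    then have "y' $ j = sig (c0 j)" using phi_min(2) y'c by blast
    then show ?thesis using y0s unfolding c0_def by simp
  qed
  have cc: "c' j = c0 j" for j
    using yy[of j] y0s[of j] unfolding y'_def c0_def by (simp add: sig_inj)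
  have "l - l0 = 0"
  proof (rule inj)
    fix j show "(\<Sum>i\<in>UNIV. (l - l0) $ i * G $ i $ j) = 0"
      using cc[of j] unfolding c'_def c0_def by (simp add: algebra_simps sum_subtractf)
    show "(\<Sum>i\<in>UNIV. (l - l0) $ i) = 0" using ls s0 by (simp add: sum_subtractf)
  qed
  then show ?thesis by simp
qed



definition Aop :: "real^'n^'k \<Rightarrow> real^'n \<Rightarrow> ((real^'n) \<times> (real^'k) \<times> real) \<Rightarrow> ((real^'n) \<times> (real^'k) \<times> real)" where
  "Aop G y u = ((\<chi> j. (1 / y$j + 1 / (1 - y$j)) * fst u $ j + (\<Sum>i\<in>UNIV. fst (snd u) $ i * G$i$j)),
               (\<chi> i. (\<Sum>j\<in>UNIV. G$i$j * fst u $ j) - snd (snd u)),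
               - (\<Sum>i\<in>UNIV. fst (snd u) $ i))"

definition st :: "((real^'n) \<times> (real^'k) \<times> real) \<Rightarrow> real^('n + ('k + unit))" where
  "st u = stack3 (fst u) (fst (snd u)) (snd (snd u))"

definition unst :: "real^('n + ('k + unit)) \<Rightarrow> ((real^'n) \<times> (real^'k) \<times> real)" where
  "unst s = ((\<chi> a. s $ Inl a), (\<chi> i. s $ Inr (Inl i)), s $ Inr (Inr ()))"

lemma unst_st: "unst (st u) = u"
  unfolding unst_def st_def stack3_def by (cases u) (auto simp: vec_eq_iff)

lemma st_unst: "st (unst s) = s"
  unfolding unst_def st_def stack3_def
  by (auto simp: vec_eq_iff split: sum.split)

lemma st_inj: "st u = st v \<Longrightarrow> u = v"
  by (metis unst_st)

lemma sum_split3: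
  fixes g :: "('n::finite + ('k::finite + unit)) \<Rightarrow> real"
  shows "(\<Sum>r\<in>UNIV. g r) = (\<Sum>a\<in>UNIV. g (Inl a)) + (\<Sum>i\<in>UNIV. g (Inr (Inl i))) + g (Inr (Inr ()))"
proof -
  have "(\<Sum>r\<in>UNIV. g r) = (\<Sum>r\<in>(UNIV <+> UNIV). g r)" by (simp only: UNIV_Plus_UNIV)
  also have "\<dots> = (\<Sum>a\<in>UNIV. g (Inl a)) + (\<Sum>q\<in>UNIV. g (Inr q))"
    by (subst sum.Plus) (simp_all add: comp_def)
  also have "(\<Sum>q\<in>UNIV. g (Inr q)) = (\<Sum>q\<in>(UNIV <+> UNIV). g (Inr q))" by (simp only: UNIV_Plus_UNIV)
  also have "\<dots> = (\<Sum>i\<in>UNIV. g (Inr (Inl i))) + (\<Sum>w\<in>UNIV. g (Inr (Inr w)))"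
    by (subst sum.Plus) (simp_all add: comp_def)
  also have "(\<Sum>w\<in>(UNIV::unit set). g (Inr (Inr w))) = g (Inr (Inr ()))" by (simp add: UNIV_unit)
  finally show ?thesis by simp
qed

lemma delta_sum_mult:
  fixes c :: "'a::finite \<Rightarrow> real"
  shows "(\<Sum>a\<in>UNIV. (if j = a then d else 0) * c a) = d * c j"
proof -
  have "(\<Sum>a\<in>UNIV. (if j = a then d else 0) * c a) = (\<Sum>a\<in>UNIV. if j = a then d * c a else 0)"
    by (rule sum.cong) auto
  then show ?thesis by (simp add: sum.delta)
qed

lemma delta_sum_mult2:
  fixes c :: "'a::finite \<Rightarrow> real"
  shows "(\<Sum>a\<in>UNIV. c a * (if j = a then d else 0)) = c j * d"
proof -
  have "(\<Sum>a\<in>UNIV. c a * (if j = a then d else 0)) = (\<Sum>a\<in>UNIV. if j = a then c a * d else 0)"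
    by (rule sum.cong) auto
  then show ?thesis by (simp add: sum.delta)
qed

lemma kkt_st: "kkt_matrix G y *v st u = st (Aop G y u)"
proof -
  obtain a b c where u: "u = (a, b, c)" by (cases u) auto
  show ?thesis
    unfolding vec_eq_iff
  proof
    fix r :: "'a + ('b + unit)"
    show "(kkt_matrix G y *v st u) $ r = st (Aop G y u) $ r"
    proof (cases r)
      case (Inl j)
      then show ?thesis unfolding u
        by (simp add: matrix_vector_mult_def sum_split3 kkt_matrix_def st_def stack3_def Aop_def delta_sum_mult delta_sum_mult2 mult.commute)
    next
      case (Inr q)
      then show ?thesis
      proof (cases q)
        case (Inl i)
        then show ?thesis unfolding u Inr
          by (simp add: matrix_vector_mult_def sum_split3 kkt_matrix_def st_def stack3_def Aop_def)
      next
        case (Inr w)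
        then show ?thesis unfolding u \<open>r = Inr q\<close>
          by (simp add: matrix_vector_mult_def sum_split3 kkt_matrix_def st_def stack3_def Aop_def sum_negf)
      qed
    qed
  qed
qed

lemma Aop_inj:
  assumes "invertible (kkt_matrix G y)" "Aop G y u = Aop G y v"
  shows "u = v"
proof -
  obtain K' where K': "K' ** kkt_matrix G y = mat 1" using assms(1) unfolding invertible_def by blast
  have "K' *v (kkt_matrix G y *v st u) = K' *v (kkt_matrix G y *v st v)" using assms(2) by (simp add: kkt_st)
  then have "st u = st v" by (simp add: matrix_vector_mul_assoc K')
  then show ?thesis by (rule st_inj)
qed

lemma Aop_surj:
  assumes "invertible (kkt_matrix G y)"
  shows "\<exists>u. Aop G y u = w"
proof -
  obtain K' where K': "kkt_matrix G y ** K' = mat 1" using assms(1) unfolding invertible_def by blast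
  let ?u = "unst (K' *v st w)"
  have "st (Aop G y ?u) = kkt_matrix G y *v (K' *v st w)" by (simp add: kkt_st[symmetric] st_unst)
  also have "\<dots> = st w" by (simp add: matrix_vector_mul_assoc K')
  finally show ?thesis using st_inj by blast
qed

lemma Aop_linear: "linear (Aop G y)"
proof (rule linearI)
  fix u v :: "(real^'a) \<times> (real^'b) \<times> real"
  show "Aop G y (u + v) = Aop G y u + Aop G y v"
    unfolding Aop_def by (simp add: vec_eq_iff algebra_simps sum.distrib)
  fix r :: real
  show "Aop G y (r *\<^sub>R u) = r *\<^sub>R Aop G y u"
    unfolding Aop_def by (simp add: vec_eq_iff algebra_simps sum_distrib_left)
qed

lemma Aop_sym: "Aop G y u \<bullet> v = u \<bullet> Aop G y v"
proof -
  obtain a b c where u: "u = (a, b, c)" by (cases u) auto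
  obtain a' b' c' where v: "v = (a', b', c')" by (cases v) auto
  have s1: "(\<Sum>j\<in>UNIV. (\<Sum>i\<in>UNIV. b$i * G$i$j) * a'$j) = (\<Sum>i\<in>UNIV. (\<Sum>j\<in>UNIV. G$i$j * a'$j) * b$i)"
  proof -
    have "(\<Sum>j\<in>UNIV. (\<Sum>i\<in>UNIV. b$i * G$i$j) * a'$j) = (\<Sum>j\<in>UNIV. \<Sum>i\<in>UNIV. b$i * G$i$j * a'$j)"
      by (simp add: sum_distrib_right)
    also have "\<dots> = (\<Sum>i\<in>UNIV. \<Sum>j\<in>UNIV. b$i * G$i$j * a'$j)" by (rule sum.swap)
    also have "\<dots> = (\<Sum>i\<in>UNIV. (\<Sum>j\<in>UNIV. G$i$j * a'$j) * b$i)"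
      by (simp add: sum_distrib_right sum_distrib_left mult.commute mult.left_commute)
    finally show ?thesis .
  qed
  have s2: "(\<Sum>j\<in>UNIV. a$j * (\<Sum>i\<in>UNIV. b'$i * G$i$j)) = (\<Sum>i\<in>UNIV. (\<Sum>j\<in>UNIV. G$i$j * a$j) * b'$i)"
  proof -
    have "(\<Sum>j\<in>UNIV. a$j * (\<Sum>i\<in>UNIV. b'$i * G$i$j)) = (\<Sum>j\<in>UNIV. \<Sum>i\<in>UNIV. b'$i * G$i$j * a$j)"
      by (simp add: sum_distrib_left mult.commute mult.left_commute)
    also have "\<dots> = (\<Sum>i\<in>UNIV. \<Sum>j\<in>UNIV. b'$i * G$i$j * a$j)" by (rule sum.swap)
    also have "\<dots> = (\<Sum>i\<in>UNIV. (\<Sum>j\<in>UNIV. G$i$j * a$j) * b'$i)"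
      by (simp add: sum_distrib_right sum_distrib_left mult.commute mult.left_commute)
    finally show ?thesis .
  qed
  have L: "Aop G y u \<bullet> v = (\<Sum>j\<in>UNIV. (1 / y$j + 1 / (1 - y$j)) * a$j * a'$j)
      + (\<Sum>j\<in>UNIV. (\<Sum>i\<in>UNIV. b$i * G$i$j) * a'$j)
      + (\<Sum>i\<in>UNIV. (\<Sum>j\<in>UNIV. G$i$j * a$j) * b'$i) - c * (\<Sum>i\<in>UNIV. b'$i) - (\<Sum>i\<in>UNIV. b$i) * c'"
    unfolding u v Aop_def by (simp add: inner_vec_def sum.distrib algebra_simps sum_subtractf sum_distrib_left)
  have R: "u \<bullet> Aop G y v = (\<Sum>j\<in>UNIV. (1 / y$j + 1 / (1 - y$j)) * a$j * a'$j)
      + (\<Sum>j\<in>UNIV. a$j * (\<Sum>i\<in>UNIV. b'$i * G$i$j))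
      + (\<Sum>i\<in>UNIV. (\<Sum>j\<in>UNIV. G$i$j * a'$j) * b$i) - c' * (\<Sum>i\<in>UNIV. b$i) - (\<Sum>i\<in>UNIV. b'$i) * c"
    unfolding u v Aop_def by (simp add: inner_vec_def sum.distrib algebra_simps sum_subtractf sum_distrib_left)
  show ?thesis unfolding L R s1 s2 by (simp add: algebra_simps)
qed



lemma implicit_core:
  fixes F :: "('a::real_normed_vector \<times> 'b::real_normed_vector) \<Rightarrow> 'c::real_normed_vector"
    and z :: "'b \<Rightarrow> 'a"
  assumes derF: "(F has_derivative F') (at (z b0, b0))"
    and L: "bounded_linear L" and LF: "\<And>u. L (F' (u, 0)) = u"
    and contz: "continuous (at b0) z"
    and T: "open T" "b0 \<in> T" and eq: "\<And>b. b \<in> T \<Longrightarrow> F (z b, b) = F (z b0, b0)"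
    and \<epsilon>: "\<epsilon> > 0"
  shows "\<exists>d>0. \<forall>b. norm (b - b0) < d \<longrightarrow>
     norm ((z b - z b0) + L (F' (0, b - b0))) \<le> \<epsilon> * (norm (z b - z b0) + norm (b - b0))"
proof -
  obtain C where C: "0 < C" "\<And>x. norm (L x) \<le> norm x * C"
    using bounded_linear.pos_bounded[OF L] by blast
  have blF: "bounded_linear F'" using derF has_derivative_bounded_linear by blast
  have "\<epsilon> / C > 0" using \<epsilon> C by simp
  then obtain d0 where d0: "d0 > 0" and d0P: "\<And>w. norm (w - (z b0, b0)) < d0 \<Longrightarrow>
      norm (F w - F (z b0, b0) - F' (w - (z b0, b0))) \<le> \<epsilon> / C * norm (w - (z b0, b0))"
    using derF unfolding has_derivative_at_alt by blast
  obtain d1 where d1: "d1 > 0" and d1P: "\<And>b. dist b b0 < d1 \<Longrightarrow> dist (z b) (z b0) < d0/2"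
    using contz d0 unfolding continuous_at_eps_delta by (meson half_gt_zero)
  obtain d2 where d2: "d2 > 0" and d2P: "\<And>b. dist b b0 < d2 \<Longrightarrow> b \<in> T"
    using T unfolding open_dist by (metis dist_commute)
  define d where "d = min (min d1 d2) (d0/2)"
  have "d > 0" using d0 d1 d2 unfolding d_def by simp
  moreover have "norm ((z b - z b0) + L (F' (0, b - b0))) \<le> \<epsilon> * (norm (z b - z b0) + norm (b - b0))"
    if b: "norm (b - b0) < d" for b
  proof -
    have bT: "b \<in> T" using d2P b unfolding d_def by (simp add: dist_norm)
    have zb: "norm (z b - z b0) < d0/2" using d1P[of b] b unfolding d_def by (simp add: dist_norm)
    let ?w = "(z b, b)"
    have wd: "?w - (z b0, b0) = (z b - z b0, b - b0)" by simp
    have nw: "norm (?w - (z b0, b0)) \<le> norm (z b - z b0) + norm (b - b0)"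
      unfolding wd by (rule norm_Pair_le)
    have "norm (?w - (z b0, b0)) < d0" using nw zb b unfolding d_def by simp
    then have "norm (F ?w - F (z b0, b0) - F' (?w - (z b0, b0))) \<le> \<epsilon> / C * norm (?w - (z b0, b0))"
      by (rule d0P)
    then have "norm (F' (z b - z b0, b - b0)) \<le> \<epsilon> / C * norm (?w - (z b0, b0))"
      using eq[OF bT] wd by simp
    also have "\<dots> \<le> \<epsilon> / C * (norm (z b - z b0) + norm (b - b0))"
      using nw \<epsilon> C by (intro mult_left_mono) auto
    finally have 1: "norm (F' (z b - z b0, b - b0)) \<le> \<epsilon> / C * (norm (z b - z b0) + norm (b - b0))" .
    have "F' (z b - z b0, b - b0) = F' (z b - z b0, 0) + F' (0, b - b0)"
      using linear_add[OF bounded_linear.linear[OF blF], of "(z b - z b0, 0)" "(0, b - b0)"] by simp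
    then have "L (F' (z b - z b0, b - b0)) = (z b - z b0) + L (F' (0, b - b0))"
      using linear_add[OF bounded_linear.linear[OF L]] LF by simp
    then have "norm ((z b - z b0) + L (F' (0, b - b0))) \<le> norm (F' (z b - z b0, b - b0)) * C"
      using C(2) by metis
    also have "\<dots> \<le> \<epsilon> / C * (norm (z b - z b0) + norm (b - b0)) * C"
      using 1 C by (intro mult_right_mono) auto
    also have "\<dots> = \<epsilon> * (norm (z b - z b0) + norm (b - b0))" using C by simp
    finally show ?thesis .
  qed
  ultimately show ?thesis by blast
qed

lemma implicit_deriv:
  fixes F :: "('a::real_normed_vector \<times> 'b::real_normed_vector) \<Rightarrow> 'c::real_normed_vector"
    and z :: "'b \<Rightarrow> 'a"
  assumes derF: "(F has_derivative F') (at (z b0, b0))"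
    and L: "bounded_linear L" and LF: "\<And>u. L (F' (u, 0)) = u"
    and contz: "continuous (at b0) z"
    and T: "open T" "b0 \<in> T" and eq: "\<And>b. b \<in> T \<Longrightarrow> F (z b, b) = F (z b0, b0)"
  shows "(z has_derivative (\<lambda>v. - L (F' (0, v)))) (at b0)"
proof -
  have blF: "bounded_linear F'" using derF has_derivative_bounded_linear by blast
  have blM: "bounded_linear (\<lambda>v. L (F' (0, v)))"
  proof -
    have "bounded_linear (\<lambda>v::'b. (0::'a, v))" by (rule bounded_linear_Pair) (auto intro: bounded_linear_zero bounded_linear_ident)
    then show ?thesis by (rule bounded_linear_compose[OF L bounded_linear_compose[OF blF]])
  qed
  obtain C2 where C2: "0 < C2" "\<And>x. norm (L (F' (0, x))) \<le> norm x * C2"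
    using bounded_linear.pos_bounded[OF blM] by blast
  obtain d where d: "d > 0" and dP: "\<And>b. norm (b - b0) < d \<Longrightarrow>
     norm ((z b - z b0) + L (F' (0, b - b0))) \<le> 1/2 * (norm (z b - z b0) + norm (b - b0))"
    using implicit_core[OF assms, of "1/2"] by auto
  define B where "B = 1 + 2 * C2"
  have B: "B > 0" using C2 unfolding B_def by simp
  have lip: "norm (z b - z b0) \<le> B * norm (b - b0)" if "norm (b - b0) < d" for b
  proof -
    have "norm (z b - z b0) \<le> norm ((z b - z b0) + L (F' (0, b - b0))) + norm (L (F' (0, b - b0)))"
      by (metis add_diff_cancel norm_triangle_ineq4)
    also have "\<dots> \<le> 1/2 * (norm (z b - z b0) + norm (b - b0)) + norm (b - b0) * C2"
      using dP[OF that] C2(2)[of "b - b0"] by linarith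
    finally show ?thesis unfolding B_def by (simp add: algebra_simps)
  qed
  have lin: "bounded_linear (\<lambda>v. - L (F' (0, v)))" using blM bounded_linear_minus by blast
  show ?thesis
    unfolding has_derivative_at_alt
  proof (intro conjI lin allI impI)
    fix e :: real assume e: "e > 0"
    then have "e / (B + 1) > 0" using B by simp
    then obtain d' where d': "d' > 0" and d'P: "\<And>b. norm (b - b0) < d' \<Longrightarrow>
       norm ((z b - z b0) + L (F' (0, b - b0))) \<le> e / (B + 1) * (norm (z b - z b0) + norm (b - b0))"
      using implicit_core[OF assms] by blast
    show "\<exists>d>0. \<forall>y. norm (y - b0) < d \<longrightarrow> norm (z y - z b0 - - L (F' (0, y - b0))) \<le> e * norm (y - b0)"
    proof (intro exI[of _ "min d d'"] conjI allI impI)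
      show "min d d' > 0" using d d' by simp
      fix b assume b: "norm (b - b0) < min d d'"
      have "norm (z b - z b0 - - L (F' (0, b - b0))) = norm ((z b - z b0) + L (F' (0, b - b0)))" by simp
      also have "\<dots> \<le> e / (B + 1) * (norm (z b - z b0) + norm (b - b0))" using d'P b by simp
      also have "\<dots> \<le> e / (B + 1) * (B * norm (b - b0) + norm (b - b0))"
        using lip[of b] b e B by (intro mult_left_mono) auto
      also have "\<dots> = e * norm (b - b0)" using B by (simp add: field_simps)
      finally show "norm (z b - z b0 - - L (F' (0, b - b0))) \<le> e * norm (b - b0)" .
    qed
  qed
qed





lemma tendsto_sig[tendsto_intros]:
  assumes "(f \<longlongrightarrow> c) F" shows "((\<lambda>x. sig (f x)) \<longlongrightarrow> sig c) F"
proof -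
  have "1 + exp c \<noteq> 0" by (smt (verit) exp_gt_zero)
  then show ?thesis unfolding sig_def by (intro tendsto_intros assms) auto
qed

lemma lam_cont:
  fixes Gf :: "'a::metric_space \<Rightarrow> real^'n^'k" and hf :: "'a \<Rightarrow> real^'k"
    and lam :: "'a \<Rightarrow> real^'k" and tt :: "'a \<Rightarrow> real"
  assumes Gc: "continuous (at \<theta>0) Gf" and hc: "continuous (at \<theta>0) hf"
    and U: "open U" "\<theta>0 \<in> U"
    and pos: "\<And>\<theta> i. \<theta> \<in> U \<Longrightarrow> 0 \<le> lam \<theta> $ i"
    and s1: "\<And>\<theta>. \<theta> \<in> U \<Longrightarrow> (\<Sum>i\<in>UNIV. lam \<theta> $ i) = 1"
    and act: "\<And>\<theta> i. \<theta> \<in> U \<Longrightarrow>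
       (\<Sum>j\<in>UNIV. Gf \<theta> $ i $ j * sig (\<Sum>i'\<in>UNIV. lam \<theta> $ i' * Gf \<theta> $ i' $ j)) + hf \<theta> $ i = tt \<theta>"
    and uniq: "\<And>l. (\<forall>i. 0 \<le> l $ i) \<Longrightarrow> (\<Sum>i\<in>UNIV. l $ i) = 1 \<Longrightarrow>
       (\<forall>i i'. (\<Sum>j\<in>UNIV. Gf \<theta>0 $ i $ j * sig (\<Sum>i''\<in>UNIV. l $ i'' * Gf \<theta>0 $ i'' $ j)) + hf \<theta>0 $ i
             = (\<Sum>j\<in>UNIV. Gf \<theta>0 $ i' $ j * sig (\<Sum>i''\<in>UNIV. l $ i'' * Gf \<theta>0 $ i'' $ j)) + hf \<theta>0 $ i')
       \<Longrightarrow> l = lam \<theta>0"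
  shows "continuous (at \<theta>0) lam"
  unfolding continuous_at_sequentially
proof (intro allI impI)
  fix x assume x: "x \<longlonglongrightarrow> \<theta>0"
  show "(lam \<circ> x) \<longlonglongrightarrow> lam \<theta>0"
  proof (rule ccontr)
    assume nt: "\<not> (lam \<circ> x) \<longlonglongrightarrow> lam \<theta>0"
    then obtain e where e: "e > 0" and ne: "\<not> eventually (\<lambda>n. dist (lam (x n)) (lam \<theta>0) < e) sequentially"
      unfolding tendsto_iff by auto
    have evU: "eventually (\<lambda>n. x n \<in> U) sequentially" by (rule topological_tendstoD[OF x U])
    have "\<not> eventually (\<lambda>n. x n \<in> U \<longrightarrow> dist (lam (x n)) (lam \<theta>0) < e) sequentially"
      by (rule not_eventually_impI[OF evU ne])
    from not_eventually_sequentiallyD[OF this] obtain r :: "nat \<Rightarrow> nat" where r: "strict_mono r"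
      and rP0: "\<forall>n. \<not> (x (r n) \<in> U \<longrightarrow> dist (lam (x (r n))) (lam \<theta>0) < e)"
      by blast
    have rP: "\<And>n. x (r n) \<in> U" "\<And>n. \<not> dist (lam (x (r n))) (lam \<theta>0) < e" using rP0 by auto
    define S where "S = {l::real^'k. (\<forall>i. 0 \<le> l $ i) \<and> (\<Sum>i\<in>UNIV. l $ i) = 1}"
    have Seq: "S = {l. \<forall>i. 0 \<le> l $ i} \<inter> {l. (\<Sum>i\<in>UNIV. l $ i) = 1}" unfolding S_def by auto
    have clS: "closed S" unfolding Seq
      by (intro closed_Int closed_Collect_all closed_Collect_le closed_Collect_eq continuous_intros)
    have bS: "bounded S"
    proof -
      have "S \<subseteq> cball 0 1"
      proof
        fix l assume l: "l \<in> S"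
        have "norm l \<le> (\<Sum>i\<in>UNIV. \<bar>l $ i\<bar>)" by (rule norm_le_l1_cart)
        also have "\<dots> = (\<Sum>i\<in>UNIV. l $ i)" using l unfolding S_def by (intro sum.cong) auto
        also have "\<dots> = 1" using l unfolding S_def by auto
        finally show "l \<in> cball 0 1" by simp
      qed
      then show ?thesis using bounded_cball bounded_subset by blast
    qed
    have cS: "compact S" using clS bS compact_eq_bounded_closed by blast
    have inS: "\<forall>n. lam (x (r n)) \<in> S" using pos s1 rP(1) unfolding S_def by auto
    obtain l' r2 where l': "l' \<in> S" and r2: "strict_mono (r2 :: nat \<Rightarrow> nat)"
      and lim: "((\<lambda>n. lam (x (r n))) \<circ> r2) \<longlonglongrightarrow> l'"
      using seq_compactE[OF compact_imp_seq_compact[OF cS] inS] by blast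
    define q where "q = r \<circ> r2"
    have q: "strict_mono q" unfolding q_def using r r2 by (rule strict_mono_o)
    have xq: "(\<lambda>n. x (q n)) \<longlonglongrightarrow> \<theta>0" using LIMSEQ_subseq_LIMSEQ[OF x q] by (simp add: o_def)
    have lq: "(\<lambda>n. lam (x (q n))) \<longlonglongrightarrow> l'" using lim by (simp add: q_def o_def)
    have Gq: "(\<lambda>n. Gf (x (q n))) \<longlonglongrightarrow> Gf \<theta>0"
      using Gc xq unfolding continuous_at_sequentially by (simp add: o_def)
    have hq: "(\<lambda>n. hf (x (q n))) \<longlonglongrightarrow> hf \<theta>0"
      using hc xq unfolding continuous_at_sequentially by (simp add: o_def)
    define W where "W = (\<lambda>(G::real^'n^'k) (h::real^'k) (l::real^'k) i.
       (\<Sum>j\<in>UNIV. G $ i $ j * sig (\<Sum>i''\<in>UNIV. l $ i'' * G $ i'' $ j)) + h $ i)"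
    have Wlim: "(\<lambda>n. W (Gf (x (q n))) (hf (x (q n))) (lam (x (q n))) i) \<longlonglongrightarrow> W (Gf \<theta>0) (hf \<theta>0) l' i" for i
      unfolding W_def by (intro tendsto_intros Gq hq lq)
    have Weq: "W (Gf \<theta>0) (hf \<theta>0) l' i = W (Gf \<theta>0) (hf \<theta>0) l' i'" for i i'
    proof -
      have "(\<lambda>n. W (Gf (x (q n))) (hf (x (q n))) (lam (x (q n))) i - W (Gf (x (q n))) (hf (x (q n))) (lam (x (q n))) i')
         \<longlonglongrightarrow> W (Gf \<theta>0) (hf \<theta>0) l' i - W (Gf \<theta>0) (hf \<theta>0) l' i'"
        by (intro tendsto_diff Wlim)
      moreover have "\<And>n. W (Gf (x (q n))) (hf (x (q n))) (lam (x (q n))) i - W (Gf (x (q n))) (hf (x (q n))) (lam (x (q n))) i' = 0"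
      proof -
        fix n
        have "x (q n) \<in> U" using rP(1) unfolding q_def by simp
        then show "W (Gf (x (q n))) (hf (x (q n))) (lam (x (q n))) i - W (Gf (x (q n))) (hf (x (q n))) (lam (x (q n))) i' = 0"
          unfolding W_def using act by simp
      qed
      ultimately have "(\<lambda>n. 0::real) \<longlonglongrightarrow> W (Gf \<theta>0) (hf \<theta>0) l' i - W (Gf \<theta>0) (hf \<theta>0) l' i'" by simp
      from LIMSEQ_unique[OF tendsto_const this]
      have "W (Gf \<theta>0) (hf \<theta>0) l' i - W (Gf \<theta>0) (hf \<theta>0) l' i' = 0" by simp
      then show ?thesis by simp
    qed
    have "l' = lam \<theta>0" using l' Weq unfolding S_def W_def by (intro uniq) auto
    then have "eventually (\<lambda>n. dist (lam (x (q n))) (lam \<theta>0) < e) sequentially"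
      using lq e unfolding tendsto_iff by auto
    then obtain N where N: "\<And>n. n \<ge> N \<Longrightarrow> dist (lam (x (q n))) (lam \<theta>0) < e"
      unfolding eventually_sequentially by blast
    then have "dist (lam (x (q N))) (lam \<theta>0) < e" by simp
    then show False using rP(2) unfolding q_def by simp
  qed
qed




lemma vec_nth_has_derivative:
  "(f has_derivative f') F \<Longrightarrow> ((\<lambda>x. f x $ i) has_derivative (\<lambda>h. f' h $ i)) F"
  by (rule bounded_linear.has_derivative[OF bounded_linear_vec_nth])

lemma has_derivative_vec_lambda:
  fixes c :: "'m::finite \<Rightarrow> 'a::real_normed_vector \<Rightarrow> real"
  assumes "\<And>i. ((\<lambda>x. c i x) has_derivative c' i) (at a)"
  shows "((\<lambda>x. \<chi> i. c i x) has_derivative (\<lambda>h. \<chi> i. c' i h)) (at a)"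
  using has_derivative_vec[of "\<lambda>x. \<chi> i. c i x" c' a] assms by simp

lemma hd_ln:
  fixes u :: "'a::real_normed_vector \<Rightarrow> real"
  assumes "(u has_derivative u') (at w)" "0 < u w"
  shows "((\<lambda>x. ln (u x)) has_derivative (\<lambda>h. (1 / u w) * u' h)) (at w)"
proof -
  have "(ln has_derivative (*) (1 / u w)) (at (u w))"
    using DERIV_ln_divide[OF assms(2)] by (rule has_field_derivative_imp_has_derivative)
  from has_derivative_compose[OF assms(1) this] show ?thesis .
qed

theorem proposition3:
  fixes f :: "'x \<Rightarrow> real^'n::finite \<Rightarrow> real^'p::finite \<Rightarrow> real" and x :: 'x
    and ys :: "'k::finite \<Rightarrow> real^'n::finite"
    and loss :: "real^'n \<Rightarrow> real^'n \<Rightarrow> real" and ystar :: "real^'n"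
    and yhat :: "real^'p \<Rightarrow> real^'n" and tt :: "real^'p \<Rightarrow> real" and lam :: "real^'p \<Rightarrow> real^'k"
    and U :: "(real^'p) set" and \<theta>0 :: "real^'p"
    and cy :: "real^'n" and clam :: "real^'k" and ct :: real
  assumes f_diff_y: "\<And>y \<theta>. (\<lambda>y. f x y \<theta>) differentiable (at y)"
    and f_diff_theta: "\<And>y \<theta>. (\<lambda>\<theta>. f x y \<theta>) differentiable (at \<theta>)"
    and grad_y_diff_theta: "\<And>y \<theta>. (\<lambda>\<theta>. grad (\<lambda>y. f x y \<theta>) y) differentiable (at \<theta>)"
    and ys_in: "\<And>i j. 0 < ys i $ j \<and> ys i $ j < 1"
    and U_open: "open U" and \<theta>0_in: "\<theta>0 \<in> U"
    and sol: "\<And>\<theta>. \<theta> \<in> U \<Longrightarrow> bundle_solution (Gmat f x ys \<theta>) (hvec f x ys \<theta>) (yhat \<theta>) (tt \<theta>)"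
    and dual: "\<And>\<theta>. \<theta> \<in> U \<Longrightarrow>
       bundle_opt_dual (Gmat f x ys \<theta>) (hvec f x ys \<theta>) (yhat \<theta>) (tt \<theta>) (lam \<theta>)"
    and active: "\<And>\<theta> i. \<theta> \<in> U \<Longrightarrow>
       (Gmat f x ys \<theta> *v yhat \<theta> + hvec f x ys \<theta>) $ i = tt \<theta>"
    and loss_diff: "\<And>y. (\<lambda>y. loss y ystar) differentiable (at y)"
    and nonsing: "invertible (kkt_matrix (Gmat f x ys \<theta>0) (yhat \<theta>0))"
    and lin_sys: "kkt_matrix (Gmat f x ys \<theta>0) (yhat \<theta>0) *v stack3 cy clam ct
       = stack3 (- grad (\<lambda>y. loss y ystar) (yhat \<theta>0)) 0 0"
  shows "GDERIV (\<lambda>\<theta>. loss (yhat \<theta>) ystar) \<theta>0 :>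
    (\<Sum>i\<in>UNIV. (clam $ i) *\<^sub>R grad (\<lambda>\<theta>. f x (ys i) \<theta>) \<theta>0
      + grad (\<lambda>\<theta>. (grad (\<lambda>y. f x y \<theta>) (ys i)) \<bullet>
                 ((lam \<theta>0 $ i) *\<^sub>R cy + (clam $ i) *\<^sub>R (yhat \<theta>0 - ys i))) \<theta>0)"
proof -
  define g where "g i \<theta> = grad (\<lambda>y. f x y \<theta>) (ys i)" for i \<theta>
  define G where "G \<theta> = Gmat f x ys \<theta>" for \<theta>
  define hv where "hv \<theta> = hvec f x ys \<theta>" for \<theta>
  have Gcomp: "G \<theta> $ i $ j = g i \<theta> $ j" for \<theta> i j by (simp add: G_def Gmat_def g_def)
  have Grow: "G \<theta> $ i = g i \<theta>" for \<theta> i by (simp add: G_def Gmat_def g_def)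
  have hcomp: "hv \<theta> $ i = f x (ys i) \<theta> - g i \<theta> \<bullet> ys i" for \<theta> i
    by (simp add: hv_def hvec_def Gmat_def g_def)
  have sol': "\<And>\<theta>. \<theta> \<in> U \<Longrightarrow> bundle_solution (G \<theta>) (hv \<theta>) (yhat \<theta>) (tt \<theta>)"
    using sol unfolding G_def hv_def .
  have dual': "\<And>\<theta>. \<theta> \<in> U \<Longrightarrow> bundle_opt_dual (G \<theta>) (hv \<theta>) (yhat \<theta>) (tt \<theta>) (lam \<theta>)"
    using dual unfolding G_def hv_def .
  have active': "\<And>\<theta> i. \<theta> \<in> U \<Longrightarrow> (G \<theta> *v yhat \<theta> + hv \<theta>) $ i = tt \<theta>"
    using active unfolding G_def hv_def .
  have nonsing': "invertible (kkt_matrix (G \<theta>0) (yhat \<theta>0))" using nonsing unfolding G_def .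
  have lin_sys': "kkt_matrix (G \<theta>0) (yhat \<theta>0) *v stack3 cy clam ct
       = stack3 (- grad (\<lambda>y. loss y ystar) (yhat \<theta>0)) 0 0" using lin_sys unfolding G_def .
  have yb: "yhat \<theta> \<in> unit_box" if "\<theta> \<in> U" for \<theta>
    using sol'[OF that] unfolding bundle_solution_def bundle_feasible_def by blast
  have s1: "(\<Sum>i\<in>UNIV. lam \<theta> $ i) = 1" if "\<theta> \<in> U" for \<theta>
    using dual_stationary(1)[OF dual'[OF that] yb[OF that]] .
  have ysig: "yhat \<theta> $ j = sig (\<Sum>i\<in>UNIV. lam \<theta> $ i * G \<theta> $ i $ j)" if "\<theta> \<in> U" for \<theta> j
    using dual_stationary(2)[OF dual'[OF that] yb[OF that]] .
  have lpos: "0 \<le> lam \<theta> $ i" if "\<theta> \<in> U" for \<theta> i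
    using dual'[OF that] unfolding bundle_opt_dual_def by blast
  have act: "(\<Sum>j\<in>UNIV. G \<theta> $ i $ j * sig (\<Sum>i'\<in>UNIV. lam \<theta> $ i' * G \<theta> $ i' $ j)) + hv \<theta> $ i = tt \<theta>"
    if "\<theta> \<in> U" for \<theta> i
    using active'[OF that, of i] ysig[OF that] by (simp add: matrix_vector_mult_def)
  have gdiff: "g i differentiable (at \<theta>)" for i \<theta>
  proof -
    have "g i = (\<lambda>\<theta>. grad (\<lambda>y. f x y \<theta>) (ys i))" by (rule ext) (simp add: g_def)
    then show ?thesis using grad_y_diff_theta by simp
  qed
  have gc: "continuous (at \<theta>0) (g i)" for i
    using differentiable_imp_continuous_within[OF gdiff] .
  have fc: "continuous (at \<theta>0) (\<lambda>\<theta>. f x (ys i) \<theta>)" for i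
    using differentiable_imp_continuous_within[OF f_diff_theta] .
  have Gc: "continuous (at \<theta>0) G"
    unfolding continuous_at
  proof (rule vec_tendstoI)
    fix i
    show "((\<lambda>\<theta>. G \<theta> $ i) \<longlongrightarrow> G \<theta>0 $ i) (at \<theta>0)"
      unfolding Grow using gc[of i] unfolding continuous_at .
  qed
  have hc: "continuous (at \<theta>0) hv"
    unfolding continuous_at
  proof (rule vec_tendstoI)
    fix i
    have "((\<lambda>\<theta>. f x (ys i) \<theta> - g i \<theta> \<bullet> ys i) \<longlongrightarrow> f x (ys i) \<theta>0 - g i \<theta>0 \<bullet> ys i) (at \<theta>0)"
      using fc[of i] gc[of i] unfolding continuous_at by (intro tendsto_intros)
    then show "((\<lambda>\<theta>. hv \<theta> $ i) \<longlongrightarrow> hv \<theta>0 $ i) (at \<theta>0)" unfolding hcomp .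
  qed
  have inj0: "\<mu> = 0" if "\<And>j. (\<Sum>i\<in>UNIV. \<mu> $ i * G \<theta>0 $ i $ j) = 0" "(\<Sum>i\<in>UNIV. \<mu> $ i) = 0"
    for \<mu> :: "real^'k"
  proof -
    have "Aop (G \<theta>0) (yhat \<theta>0) (0, \<mu>, 0) = Aop (G \<theta>0) (yhat \<theta>0) (0, 0, 0)"
      using that by (simp add: Aop_def vec_eq_iff)
    from Aop_inj[OF nonsing' this] show ?thesis by simp
  qed
  have lamc: "continuous (at \<theta>0) lam"
  proof (rule lam_cont[where Gf = G and hf = hv and tt = tt, OF Gc hc U_open \<theta>0_in])
    show "\<And>\<theta> i. \<theta> \<in> U \<Longrightarrow> 0 \<le> lam \<theta> $ i" by (rule lpos)
    show "\<And>\<theta>. \<theta> \<in> U \<Longrightarrow> (\<Sum>i\<in>UNIV. lam \<theta> $ i) = 1" by (rule s1)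
    show "\<And>\<theta> i. \<theta> \<in> U \<Longrightarrow>
       (\<Sum>j\<in>UNIV. G \<theta> $ i $ j * sig (\<Sum>i'\<in>UNIV. lam \<theta> $ i' * G \<theta> $ i' $ j)) + hv \<theta> $ i = tt \<theta>"
      by (rule act)
    fix l :: "real^'k"
    assume "\<forall>i. 0 \<le> l $ i" "(\<Sum>i\<in>UNIV. l $ i) = 1"
      "\<forall>i i'. (\<Sum>j\<in>UNIV. G \<theta>0 $ i $ j * sig (\<Sum>i''\<in>UNIV. l $ i'' * G \<theta>0 $ i'' $ j)) + hv \<theta>0 $ i
             = (\<Sum>j\<in>UNIV. G \<theta>0 $ i' $ j * sig (\<Sum>i''\<in>UNIV. l $ i'' * G \<theta>0 $ i'' $ j)) + hv \<theta>0 $ i'"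
    then show "l = lam \<theta>0"
      using uniq_dual[OF dual'[OF \<theta>0_in] yb[OF \<theta>0_in] active'[OF \<theta>0_in] inj0] by blast
  qed
  \<comment> \<open>Step 5: a continuous representative of the primal-dual solution\<close>
  obtain i0 :: 'k where True by blast
  define ysg where "ysg \<theta> = (\<chi> j. sig (\<Sum>i\<in>UNIV. lam \<theta> $ i * G \<theta> $ i $ j))" for \<theta>
  define tts where "tts \<theta> = (\<Sum>j\<in>UNIV. G \<theta> $ i0 $ j * ysg \<theta> $ j) + hv \<theta> $ i0" for \<theta>
  define zh where "zh \<theta> = (ysg \<theta>, lam \<theta>, tts \<theta>)" for \<theta>
  have ysgU: "ysg \<theta> = yhat \<theta>" if "\<theta> \<in> U" for \<theta>
    using ysig[OF that] unfolding ysg_def by (simp add: vec_eq_iff)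
  have ttsU: "tts \<theta> = tt \<theta>" if "\<theta> \<in> U" for \<theta>
    using active'[OF that, of i0] ysgU[OF that] unfolding tts_def by (simp add: matrix_vector_mult_def)
  have ysgc: "continuous (at \<theta>0) ysg"
    using lamc Gc unfolding continuous_at ysg_def by (intro tendsto_intros)
  have ttsc: "continuous (at \<theta>0) tts"
    using Gc ysgc hc unfolding continuous_at tts_def by (intro tendsto_intros)
  have zhc: "continuous (at \<theta>0) zh"
    unfolding zh_def using ysgc lamc ttsc by (intro continuous_Pair)
  have "\<forall>i. \<exists>D. (g i has_derivative D) (at \<theta>0)" using gdiff unfolding differentiable_def by blast
  from choice[OF this] obtain Dg where Dg: "\<And>i. (g i has_derivative Dg i) (at \<theta>0)" by blast
  have Dg0: "Dg i 0 = 0" for i using Dg[of i] has_derivative_linear linear_0 by blast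
  define gf where "gf i = grad (\<lambda>\<theta>. f x (ys i) \<theta>) \<theta>0" for i
  have gfD: "((\<lambda>\<theta>. f x (ys i) \<theta>) has_derivative (\<lambda>h. h \<bullet> gf i)) (at \<theta>0)" for i
    using gderiv_grad[OF f_diff_theta] unfolding gderiv_def gf_def .
  define y0 where "y0 = yhat \<theta>0"
  define l0 where "l0 = lam \<theta>0"
  define t0 where "t0 = tt \<theta>0"
  have z0: "zh \<theta>0 = (y0, l0, t0)" unfolding zh_def y0_def l0_def t0_def using ysgU ttsU \<theta>0_in by simp
  have y0b: "0 < y0 $ j" "0 < 1 - y0 $ j" for j
    using ysig[OF \<theta>0_in, of j] sig_bounds unfolding y0_def by auto
  define w0 where "w0 = (zh \<theta>0, \<theta>0)"
  have w0': "w0 = ((y0, l0, t0), \<theta>0)" unfolding w0_def z0 ..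
  define F :: "(((real^'n) \<times> (real^'k) \<times> real) \<times> (real^'p)) \<Rightarrow> ((real^'n) \<times> (real^'k) \<times> real)" where
   "F w = ((\<chi> j. ln (fst (fst w) $ j) - ln (1 - fst (fst w) $ j) + (\<Sum>i\<in>UNIV. fst (snd (fst w)) $ i * g i (snd w) $ j)),
           (\<chi> i. (\<Sum>j\<in>UNIV. g i (snd w) $ j * fst (fst w) $ j) + (f x (ys i) (snd w) - g i (snd w) \<bullet> ys i) - snd (snd (fst w))),
           1 - (\<Sum>i\<in>UNIV. fst (snd (fst w)) $ i))" for w
  define c1 where "c1 j v = (1 / y0 $ j) * fst (fst v) $ j + (1 / (1 - y0 $ j)) * fst (fst v) $ j
      + (\<Sum>i\<in>UNIV. l0 $ i * Dg i (snd v) $ j + fst (snd (fst v)) $ i * g i \<theta>0 $ j)"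
    for j :: 'n and v :: "((real^'n) \<times> (real^'k) \<times> real) \<times> (real^'p)"
  define c2 where "c2 i v = (\<Sum>j\<in>UNIV. g i \<theta>0 $ j * fst (fst v) $ j + Dg i (snd v) $ j * y0 $ j)
      + (snd v \<bullet> gf i - Dg i (snd v) \<bullet> ys i) - snd (snd (fst v))"
    for i :: 'k and v :: "((real^'n) \<times> (real^'k) \<times> real) \<times> (real^'p)"
  define c3 where "c3 v = - (\<Sum>i\<in>UNIV. fst (snd (fst v)) $ i)"
    for v :: "((real^'n) \<times> (real^'k) \<times> real) \<times> (real^'p)"
  define F' where "F' v = ((\<chi> j. c1 j v), (\<chi> i. c2 i v), c3 v)" for v
  have hA: "((\<lambda>w. fst (fst w) $ j) has_derivative (\<lambda>v. fst (fst v) $ j)) (at w0)" for j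
    by (intro vec_nth_has_derivative has_derivative_fst has_derivative_ident)
  have hL: "((\<lambda>w. fst (snd (fst w)) $ i) has_derivative (\<lambda>v. fst (snd (fst v)) $ i)) (at w0)" for i
    by (intro vec_nth_has_derivative has_derivative_fst has_derivative_snd has_derivative_ident)
  have hT: "((\<lambda>w. snd (snd (fst w))) has_derivative (\<lambda>v. snd (snd (fst v)))) (at w0)"
    by (intro has_derivative_fst has_derivative_snd has_derivative_ident)
  have hS: "(snd has_derivative snd) (at w0)"
    by (rule bounded_linear_imp_has_derivative[OF bounded_linear_snd])
  have hg: "((\<lambda>w. g i (snd w)) has_derivative (\<lambda>v. Dg i (snd v))) (at w0)" for i
    by (rule has_derivative_compose[OF hS]) (simp add: w0_def Dg)
  have hgj: "((\<lambda>w. g i (snd w) $ j) has_derivative (\<lambda>v. Dg i (snd v) $ j)) (at w0)" for i j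
    by (rule vec_nth_has_derivative[OF hg])
  have hf: "((\<lambda>w. f x (ys i) (snd w)) has_derivative (\<lambda>v. snd v \<bullet> gf i)) (at w0)" for i
    by (rule has_derivative_compose[OF hS]) (simp add: w0_def gfD)
  have hgin: "((\<lambda>w. g i (snd w) \<bullet> ys i) has_derivative (\<lambda>v. Dg i (snd v) \<bullet> ys i)) (at w0)" for i
    by (rule has_derivative_inner_left[OF hg])
  have A0: "fst (fst w0) = y0" "fst (snd (fst w0)) = l0" "snd w0 = \<theta>0" unfolding w0' by simp_all
  have D1: "((\<lambda>w. ln (fst (fst w) $ j) - ln (1 - fst (fst w) $ j) + (\<Sum>i\<in>UNIV. fst (snd (fst w)) $ i * g i (snd w) $ j))
      has_derivative c1 j) (at w0)" for j
  proof (rule has_derivative_eq_rhs)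
    have p1: "0 < fst (fst w0) $ j" "0 < 1 - fst (fst w0) $ j" using y0b A0 by auto
    have m: "((\<lambda>w. 1 - fst (fst w) $ j) has_derivative (\<lambda>v. 0 - fst (fst v) $ j)) (at w0)"
      by (intro has_derivative_diff has_derivative_const hA)
    show "((\<lambda>w. ln (fst (fst w) $ j) - ln (1 - fst (fst w) $ j) + (\<Sum>i\<in>UNIV. fst (snd (fst w)) $ i * g i (snd w) $ j))
      has_derivative (\<lambda>v. (1 / fst (fst w0) $ j) * fst (fst v) $ j - (1 / (1 - fst (fst w0) $ j)) * (0 - fst (fst v) $ j)
         + (\<Sum>i\<in>UNIV. fst (snd (fst w0)) $ i * Dg i (snd v) $ j + fst (snd (fst v)) $ i * g i (snd w0) $ j))) (at w0)"
      by (intro has_derivative_add has_derivative_diff hd_ln[OF hA p1(1)] hd_ln[OF m p1(2)]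
          has_derivative_sum has_derivative_mult hL hgj)
    show "(\<lambda>v. (1 / fst (fst w0) $ j) * fst (fst v) $ j - (1 / (1 - fst (fst w0) $ j)) * (0 - fst (fst v) $ j)
         + (\<Sum>i\<in>UNIV. fst (snd (fst w0)) $ i * Dg i (snd v) $ j + fst (snd (fst v)) $ i * g i (snd w0) $ j)) = c1 j"
      unfolding A0 c1_def by (rule ext) simp
  qed
  have D2: "((\<lambda>w. (\<Sum>j\<in>UNIV. g i (snd w) $ j * fst (fst w) $ j) + (f x (ys i) (snd w) - g i (snd w) \<bullet> ys i) - snd (snd (fst w)))
      has_derivative c2 i) (at w0)" for i
  proof (rule has_derivative_eq_rhs)
    show "((\<lambda>w. (\<Sum>j\<in>UNIV. g i (snd w) $ j * fst (fst w) $ j) + (f x (ys i) (snd w) - g i (snd w) \<bullet> ys i) - snd (snd (fst w)))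
      has_derivative (\<lambda>v. (\<Sum>j\<in>UNIV. g i (snd w0) $ j * fst (fst v) $ j + Dg i (snd v) $ j * fst (fst w0) $ j)
        + (snd v \<bullet> gf i - Dg i (snd v) \<bullet> ys i) - snd (snd (fst v)))) (at w0)"
      by (intro has_derivative_add has_derivative_diff has_derivative_sum has_derivative_mult hA hgj hf hgin hT)
    show "(\<lambda>v. (\<Sum>j\<in>UNIV. g i (snd w0) $ j * fst (fst v) $ j + Dg i (snd v) $ j * fst (fst w0) $ j)
        + (snd v \<bullet> gf i - Dg i (snd v) \<bullet> ys i) - snd (snd (fst v))) = c2 i"
      unfolding A0 c2_def by (rule ext) simp
  qed
  have D3: "((\<lambda>w. 1 - (\<Sum>i\<in>UNIV. fst (snd (fst w)) $ i)) has_derivative c3) (at w0)"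
  proof (rule has_derivative_eq_rhs)
    show "((\<lambda>w. 1 - (\<Sum>i\<in>UNIV. fst (snd (fst w)) $ i)) has_derivative (\<lambda>v. 0 - (\<Sum>i\<in>UNIV. fst (snd (fst v)) $ i))) (at w0)"
      by (intro has_derivative_diff has_derivative_const has_derivative_sum hL)
    show "(\<lambda>v. 0 - (\<Sum>i\<in>UNIV. fst (snd (fst v)) $ i)) = c3" unfolding c3_def by (rule ext) simp
  qed
  have FD: "(F has_derivative F') (at w0)"
  proof -
    have "((\<lambda>w. ((\<chi> j. ln (fst (fst w) $ j) - ln (1 - fst (fst w) $ j) + (\<Sum>i\<in>UNIV. fst (snd (fst w)) $ i * g i (snd w) $ j)),
           (\<chi> i. (\<Sum>j\<in>UNIV. g i (snd w) $ j * fst (fst w) $ j) + (f x (ys i) (snd w) - g i (snd w) \<bullet> ys i) - snd (snd (fst w))),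
           1 - (\<Sum>i\<in>UNIV. fst (snd (fst w)) $ i))) has_derivative (\<lambda>v. ((\<chi> j. c1 j v), (\<chi> i. c2 i v), c3 v))) (at w0)"
      by (intro has_derivative_Pair has_derivative_vec_lambda D1 D2 D3)
    then show ?thesis unfolding F_def[abs_def] F'_def[abs_def] .
  qed
  \<comment> \<open>Step 7: the KKT equations hold along the solution\<close>
  have FU: "F (zh \<theta>, \<theta>) = 0" if "\<theta> \<in> U" for \<theta>
  proof -
    have 1: "ln (ysg \<theta> $ j) - ln (1 - ysg \<theta> $ j) + (\<Sum>i\<in>UNIV. lam \<theta> $ i * g i \<theta> $ j) = 0" for j
      using sig_ln[of "\<Sum>i\<in>UNIV. lam \<theta> $ i * g i \<theta> $ j"] unfolding ysg_def Gcomp by simp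
    have 2: "(\<Sum>j\<in>UNIV. g i \<theta> $ j * ysg \<theta> $ j) + (f x (ys i) \<theta> - g i \<theta> \<bullet> ys i) - tts \<theta> = 0" for i
      using active'[OF that, of i] ysgU[OF that] ttsU[OF that]
      by (simp add: matrix_vector_mult_def Gcomp hcomp)
    show ?thesis unfolding F_def zh_def using 1 2 s1[OF that] by (simp add: vec_eq_iff zero_prod_def)
  qed
  have Feq: "F (zh \<theta>, \<theta>) = F (zh \<theta>0, \<theta>0)" if "\<theta> \<in> U" for \<theta>
    using FU[OF that] FU[OF \<theta>0_in] by simp
  have F'A: "F' (u, 0) = Aop (G \<theta>0) y0 u" for u
    unfolding F'_def c1_def c2_def c3_def Aop_def
    by (simp add: Dg0 Gcomp vec_eq_iff algebra_simps)
  obtain L where Llin: "linear L" and LA: "L \<circ> Aop (G \<theta>0) y0 = id"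
    using linear_injective_left_inverse[OF Aop_linear, of "G \<theta>0" y0] Aop_inj[OF nonsing'[folded y0_def]]
    unfolding inj_def by blast
  have LA': "L (Aop (G \<theta>0) y0 u) = u" for u using fun_cong[OF LA, of u] by simp
  have AL: "Aop (G \<theta>0) y0 (L w) = w" for w
  proof -
    obtain u where u: "Aop (G \<theta>0) y0 u = w" using Aop_surj[OF nonsing'[folded y0_def]] by blast
    have "L w = u" unfolding u[symmetric] by (rule LA')
    then show ?thesis using u by simp
  qed
  have Lbl: "bounded_linear L" using Llin linear_conv_bounded_linear by blast
  have LF: "L (F' (u, 0)) = u" for u unfolding F'A LA' ..
  have zhD: "(zh has_derivative (\<lambda>v. - L (F' (0, v)))) (at \<theta>0)"
    by (rule implicit_deriv[OF FD[unfolded w0_def] Lbl LF zhc U_open \<theta>0_in Feq])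
  define Z where "Z v = - L (F' (0, v))" for v
  have yD: "(yhat has_derivative (\<lambda>v. fst (Z v))) (at \<theta>0)"
  proof (rule has_derivative_transform_within_open[OF _ U_open \<theta>0_in])
    show "((\<lambda>\<theta>. fst (zh \<theta>)) has_derivative (\<lambda>v. fst (Z v))) (at \<theta>0)"
      unfolding Z_def by (rule has_derivative_fst[OF zhD])
    show "\<And>\<theta>. \<theta> \<in> U \<Longrightarrow> fst (zh \<theta>) = yhat \<theta>" unfolding zh_def using ysgU by simp
  qed
  define gl where "gl = grad (\<lambda>y. loss y ystar) y0"
  have glD: "((\<lambda>y. loss y ystar) has_derivative (\<lambda>h. h \<bullet> gl)) (at (yhat \<theta>0))"
    using gderiv_grad[OF loss_diff] unfolding gderiv_def gl_def y0_def .
  have lossD: "((\<lambda>\<theta>. loss (yhat \<theta>) ystar) has_derivative (\<lambda>v. fst (Z v) \<bullet> gl)) (at \<theta>0)"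
    using has_derivative_compose[OF yD glD] .
  \<comment> \<open>Step 10: evaluate the derivative using the adjoint system\<close>
  have Aop_c: "Aop (G \<theta>0) y0 (cy, clam, ct) = (- gl, 0, 0)"
  proof -
    have "st (Aop (G \<theta>0) y0 (cy, clam, ct)) = st (- gl, 0, 0)"
      using lin_sys'[folded y0_def gl_def] kkt_st[of "G \<theta>0" y0 "(cy, clam, ct)"] unfolding st_def by (simp add: gl_def)
    then show ?thesis by (rule st_inj)
  qed
  have AZ: "Aop (G \<theta>0) y0 (Z v) = - F' (0, v)" for v
    unfolding Z_def by (simp only: linear_neg[OF Aop_linear] AL)
  have key: "fst (Z v) \<bullet> gl = (cy, clam, ct) \<bullet> F' (0, v)" for v
  proof -
    have "fst (Z v) \<bullet> gl = - ((- gl, 0::real^'k, 0::real) \<bullet> Z v)"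
      by (simp add: inner_prod_def inner_commute)
    also have "\<dots> = - ((cy, clam, ct) \<bullet> Aop (G \<theta>0) y0 (Z v))" unfolding Aop_c[symmetric] Aop_sym ..
    also have "\<dots> = (cy, clam, ct) \<bullet> F' (0, v)" unfolding AZ by simp
    finally show ?thesis .
  qed
  have F0v: "(cy, clam, ct) \<bullet> F' (0, v) = (\<Sum>j\<in>UNIV. cy $ j * (\<Sum>i\<in>UNIV. l0 $ i * Dg i v $ j))
      + (\<Sum>i\<in>UNIV. clam $ i * ((\<Sum>j\<in>UNIV. Dg i v $ j * y0 $ j) + (v \<bullet> gf i - Dg i v \<bullet> ys i)))" for v
    unfolding F'_def c1_def c2_def c3_def by (simp add: inner_vec_def)
  define wv where "wv i = l0 $ i *\<^sub>R cy + clam $ i *\<^sub>R (y0 - ys i)" for i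
  define gr where "gr i = grad (\<lambda>\<theta>. grad (\<lambda>y. f x y \<theta>) (ys i) \<bullet>
                 ((lam \<theta>0 $ i) *\<^sub>R cy + (clam $ i) *\<^sub>R (yhat \<theta>0 - ys i))) \<theta>0" for i
  have grv: "v \<bullet> gr i = Dg i v \<bullet> wv i" for i v
  proof -
    have fe: "(\<lambda>\<theta>. grad (\<lambda>y. f x y \<theta>) (ys i) \<bullet> ((lam \<theta>0 $ i) *\<^sub>R cy + (clam $ i) *\<^sub>R (yhat \<theta>0 - ys i)))
        = (\<lambda>\<theta>. g i \<theta> \<bullet> wv i)" unfolding g_def wv_def l0_def y0_def ..
    have d1: "((\<lambda>\<theta>. g i \<theta> \<bullet> wv i) has_derivative (\<lambda>h. Dg i h \<bullet> wv i)) (at \<theta>0)"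
      by (rule has_derivative_inner_left[OF Dg])
    then have "(\<lambda>\<theta>. g i \<theta> \<bullet> wv i) differentiable (at \<theta>0)" unfolding differentiable_def by blast
    from gderiv_grad[OF this] have d2: "((\<lambda>\<theta>. g i \<theta> \<bullet> wv i) has_derivative (\<lambda>h. h \<bullet> gr i)) (at \<theta>0)"
      unfolding gderiv_def gr_def fe .
    have "(\<lambda>h. h \<bullet> gr i) = (\<lambda>h. Dg i h \<bullet> wv i)" using has_derivative_unique[OF d2 d1] .
    then show ?thesis by metis
  qed
  have swap: "(\<Sum>j\<in>UNIV. cy $ j * (\<Sum>i\<in>UNIV. l0 $ i * Dg i v $ j)) = (\<Sum>i\<in>UNIV. l0 $ i * (Dg i v \<bullet> cy))" for v
  proof -
    have "(\<Sum>j\<in>UNIV. cy $ j * (\<Sum>i\<in>UNIV. l0 $ i * Dg i v $ j)) = (\<Sum>j\<in>UNIV. \<Sum>i\<in>UNIV. l0 $ i * (Dg i v $ j * cy $ j))"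
      by (simp add: sum_distrib_left mult.commute mult.left_commute)
    also have "\<dots> = (\<Sum>i\<in>UNIV. \<Sum>j\<in>UNIV. l0 $ i * (Dg i v $ j * cy $ j))" by (rule sum.swap)
    also have "\<dots> = (\<Sum>i\<in>UNIV. l0 $ i * (Dg i v \<bullet> cy))" by (simp add: inner_vec_def sum_distrib_left)
    finally show ?thesis .
  qed
  have final: "fst (Z v) \<bullet> gl = v \<bullet> (\<Sum>i\<in>UNIV. (clam $ i) *\<^sub>R grad (\<lambda>\<theta>. f x (ys i) \<theta>) \<theta>0 + gr i)" for v
  proof -
    have R: "v \<bullet> (\<Sum>i\<in>UNIV. (clam $ i) *\<^sub>R grad (\<lambda>\<theta>. f x (ys i) \<theta>) \<theta>0 + gr i)
        = (\<Sum>i\<in>UNIV. clam $ i * (v \<bullet> gf i) + (l0 $ i * (Dg i v \<bullet> cy) + clam $ i * (Dg i v \<bullet> y0 - Dg i v \<bullet> ys i)))"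
      unfolding inner_sum_right inner_add_right grv wv_def gf_def
      by (simp add: inner_diff_right algebra_simps)
    have L: "fst (Z v) \<bullet> gl = (\<Sum>i\<in>UNIV. l0 $ i * (Dg i v \<bullet> cy))
        + (\<Sum>i\<in>UNIV. clam $ i * ((Dg i v \<bullet> y0) + (v \<bullet> gf i - Dg i v \<bullet> ys i)))"
      unfolding key F0v swap by (simp add: inner_vec_def)
    show ?thesis unfolding R L sum.distrib[symmetric] by (rule sum.cong) (simp_all add: algebra_simps)
  qed
  show ?thesis
    unfolding gderiv_def gr_def[symmetric]
    by (rule has_derivative_eq_rhs[OF lossD]) (simp add: final)
qed


end
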